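(* Let $H$ be a traceless hermitian $4\times 4$ matrix with pairwise distinct eigenvalues $\lambda_1,\dots,\lambda_4$, let $C(z)=\prod_{k=1}^4(z-\lambda_k)$, and let $F_4(t)=\sum_{k=1}^4 \exp(i\lambda_k t)/C'(\lambda_k)$. Then for all real $t$, $$\exp(itH)=\left[H^3-iH^2\frac{d}{dt}-H\left(\tfrac12\operatorname{tr}(H^2)+\frac{d^2}{dt^2}\right)+I\left(-\tfrac13\operatorname{tr}(H^3)+\tfrac12 i\operatorname{tr}(H^2)\frac{d}{dt}+i\frac{d^3}{dt^3}\right)\right]F_4(t).$$
   Context: $I$ is the $4\times4$ identity matrix; a matrix coefficient multiplying a differential operator means the operator is applied to $F_4(t)$ and the result multiplies the matrix. *)

theory Defs
  imports "HOL-Analysis.Analysis" "HOL-Computational_Algebra.Polynomial"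
begin

definition mat_pow :: "'a::comm_ring_1^'n^'n \<Rightarrow> nat \<Rightarrow> 'a^'n^'n" where
  "mat_pow A n = ((\<lambda>M. M ** A) ^^ n) (mat 1)"

definition mat_exp :: "complex^'n^'n \<Rightarrow> complex^'n^'n" where
  "mat_exp A = (\<chi> i j. (\<Sum>n. (mat_pow A n) $ i $ j / of_nat (fact n)))"

definition scal_mat :: "'a::times \<Rightarrow> 'a^'n^'m \<Rightarrow> 'a^'n^'m" where
  "scal_mat c A = (\<chi> i j. c * A $ i $ j)"

definition hermitian :: "complex^'n^'n \<Rightarrow> bool" where
  "hermitian A \<longleftrightarrow> (\<forall>i j. A $ i $ j = cnj (A $ j $ i))"

definition eigenvalues :: "complex^'n^'n \<Rightarrow> complex set" where
  "eigenvalues A = {c. \<exists>v. v \<noteq> 0 \<and> A *v v = c *s v}"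

definition nth_deriv :: "nat \<Rightarrow> (real \<Rightarrow> complex) \<Rightarrow> real \<Rightarrow> complex" where
  "nth_deriv n f = ((\<lambda>g t. vector_derivative g (at t)) ^^ n) f"

end

theory Submission
  imports Defs
begin


definition dg :: "('n \<Rightarrow> 'a::zero) \<Rightarrow> 'a^'n^'n" where
  "dg f = (\<chi> i j. if i = j then f i else 0)"

lemma Vdg_entry: "((V::'a::comm_ring_1^'n^'n) ** dg f) $ i $ k = V$i$k * f k"
  unfolding dg_def matrix_matrix_mult_def
  by (simp add: if_distrib[of "\<lambda>x. _ * x"] cong: if_cong)

lemma dg_entry: "((V::'a::comm_ring_1^'n^'n) ** dg f ** W) $ i $ j = (\<Sum>k\<in>UNIV. V$i$k * f k * W$k$j)"
  by (simp add: matrix_matrix_mult_def[of "V ** dg f"] Vdg_entry)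

lemma dg_mult: "dg f ** dg g = (dg (\<lambda>k. f k * g k) :: 'a::comm_ring_1^'n^'n)"
  by (simp add: vec_eq_iff Vdg_entry) (simp add: dg_def)

lemma dg_one: "dg (\<lambda>k. 1) = (mat 1 :: 'a::comm_ring_1^'n^'n)"
  by (simp add: dg_def mat_def vec_eq_iff)

lemma M_mult:
  fixes V W :: "'a::comm_ring_1^'n^'n"
  assumes WV: "W ** V = mat 1"
  shows "(V ** dg f ** W) ** (V ** dg g ** W) = V ** dg (\<lambda>k. f k * g k) ** W"
proof -
  have "(V ** dg f ** W) ** (V ** dg g ** W) = V ** dg f ** (W ** V) ** dg g ** W"
    by (simp add: matrix_mul_assoc)
  also have "\<dots> = V ** (dg f ** dg g) ** W" by (simp add: WV matrix_mul_assoc)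
  finally show ?thesis by (simp add: dg_mult)
qed

lemma M_one:
  fixes V W :: "'a::comm_ring_1^'n^'n"
  assumes VW: "V ** W = mat 1"
  shows "V ** dg (\<lambda>k. 1) ** W = mat 1"
  by (simp add: dg_one VW)

lemma M_pow:
  fixes V W :: "'a::comm_ring_1^'n^'n"
  assumes WV: "W ** V = mat 1" and VW: "V ** W = mat 1"
  shows "mat_pow (V ** dg f ** W) n = V ** dg (\<lambda>k. f k ^ n) ** W"
proof (induction n)
  case 0
  then show ?case using M_one[OF VW] by (simp add: mat_pow_def)
next
  case (Suc n)
  have "mat_pow (V ** dg f ** W) (Suc n) = mat_pow (V ** dg f ** W) n ** (V ** dg f ** W)"
    by (simp add: mat_pow_def)
  also have "\<dots> = V ** dg (\<lambda>k. f k ^ Suc n) ** W"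
    unfolding Suc M_mult[OF WV] by (simp add: mult.commute)
  finally show ?case .
qed

lemma M_scal:
  fixes V W :: "'a::comm_ring_1^'n^'n"
  shows "scal_mat c (V ** dg f ** W) = V ** dg (\<lambda>k. c * f k) ** W"
  by (simp add: vec_eq_iff scal_mat_def dg_entry sum_distrib_left algebra_simps)

lemma M_add:
  fixes V W :: "'a::comm_ring_1^'n^'n"
  shows "(V ** dg f ** W) + (V ** dg g ** W) = V ** dg (\<lambda>k. f k + g k) ** W"
  by (simp add: vec_eq_iff dg_entry sum.distrib[symmetric] algebra_simps)

lemma M_diff:
  fixes V W :: "'a::comm_ring_1^'n^'n"
  shows "(V ** dg f ** W) - (V ** dg g ** W) = V ** dg (\<lambda>k. f k - g k) ** W"
  by (simp add: vec_eq_iff dg_entry sum_subtractf[symmetric] algebra_simps)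

lemma M_mat:
  fixes V W :: "'a::comm_ring_1^'n^'n"
  assumes VW: "V ** W = mat 1"
  shows "mat c = V ** dg (\<lambda>k. c) ** W"
proof -
  have "mat c = scal_mat c (mat 1 :: 'a^'n^'n)"
    by (simp add: vec_eq_iff scal_mat_def mat_def)
  then show ?thesis using M_scal[of c V "\<lambda>k. 1" W] M_one[OF VW] by simp
qed

lemma M_trace:
  fixes V W :: "'a::comm_ring_1^'n^'n"
  assumes WV: "W ** V = mat 1"
  shows "trace (V ** dg f ** W) = (\<Sum>k\<in>UNIV. f k)"
proof -
  have "trace (V ** dg f ** W) = trace (W ** (V ** dg f))" by (rule trace_mul_sym)
  also have "\<dots> = trace (dg f)" by (simp add: matrix_mul_assoc WV)
  finally show ?thesis by (simp add: trace_def dg_def)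
qed

lemma M_exp:
  fixes V W :: "complex^'n^'n"
  assumes WV: "W ** V = mat 1" and VW: "V ** W = mat 1"
  shows "mat_exp (V ** dg f ** W) = V ** dg (\<lambda>k. exp (f k)) ** W"
proof -
  have "(\<lambda>n. mat_pow (V ** dg f ** W) n $ i $ j / of_nat (fact n)) sums
        (\<Sum>k\<in>UNIV. V$i$k * exp (f k) * W$k$j)" for i j
  proof -
    have "(\<lambda>n. \<Sum>k\<in>UNIV. V$i$k * ((f k)^n /\<^sub>R fact n) * W$k$j) sums (\<Sum>k\<in>UNIV. V$i$k * exp (f k) * W$k$j)"
      by (intro sums_sum sums_mult sums_mult2 exp_converges)
    moreover have "(\<Sum>k\<in>UNIV. V$i$k * ((f k)^n /\<^sub>R fact n) * W$k$j) = mat_pow (V ** dg f ** W) n $ i $ j / of_nat (fact n)" for n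
      by (simp add: M_pow[OF WV VW] dg_entry sum_divide_distrib scaleR_conv_of_real divide_inverse mult_ac sum_distrib_left)
    ultimately show ?thesis by simp
  qed
  then show ?thesis
    by (simp add: mat_exp_def vec_eq_iff dg_entry sums_unique[symmetric])
qed



lemma cube_id:
  fixes x a b c :: complex
  shows "x^3 + a * x^2 + (a^2 - (a^2+b^2+c^2+(-(a+b+c))^2)/2)*x
        + (a^3 - a * ((a^2+b^2+c^2+(-(a+b+c))^2)/2) - (a^3+b^3+c^3+(-(a+b+c))^3)/3)
     = (x - b) * (x - c) * (x - (-(a+b+c)))"
  by (simp add: field_simps power2_eq_square power3_eq_cube)

lemma step2g:
  fixes l :: "4 \<Rightarrow> complex"
  assumes U: "UNIV = {k,b,c,e}" and dist: "distinct [k,b,c,e]" and s1: "(\<Sum>k\<in>UNIV. l k) = 0"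
  shows "x^3 + l k * x^2 + (l k^2 - (\<Sum>k\<in>UNIV. l k ^ 2)/2)*x
        + (l k^3 - l k * ((\<Sum>k\<in>UNIV. l k ^ 2)/2) - (\<Sum>k\<in>UNIV. l k^3)/3)
     = (\<Prod>j\<in>UNIV-{k}. x - l j)"
proof -
  have sm: "\<And>f::4\<Rightarrow>complex. sum f UNIV = f k + f b + f c + f e"
    using dist by (simp add: U add_ac)
  have U2: "UNIV - {k} = {b,c,e}" using dist U by auto
  have pr: "(\<Prod>j\<in>UNIV-{k}. x - l j) = (x - l b) * (x - l c) * (x - l e)"
    using dist unfolding U2 by (simp add: mult_ac)
  have h: "l k + l b + l c + l e = 0" using s1 sm[of l] by simp
  have le: "l e = -(l k + l b + l c)" using h by (metis add.commute eq_neg_iff_add_eq_0)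
  show ?thesis unfolding pr sm le by (rule cube_id)
qed

lemma step2:
  fixes l :: "4 \<Rightarrow> complex"
  assumes s1: "(\<Sum>k\<in>UNIV. l k) = 0"
  shows "x^3 + l k * x^2 + (l k^2 - (\<Sum>k\<in>UNIV. l k ^ 2)/2)*x
        + (l k^3 - l k * ((\<Sum>k\<in>UNIV. l k ^ 2)/2) - (\<Sum>k\<in>UNIV. l k^3)/3)
     = (\<Prod>j\<in>UNIV-{k}. x - l j)"
proof -
  consider "k = 1" | "k = 2" | "k = 3" | "k = 4" using exhaust_4 by blast
  then show ?thesis
  proof cases
    case 1
    have u: "UNIV = {k,2,3,4::4}" using 1 by (auto simp: UNIV_4)
    have d: "distinct [k,2,3,4::4]" using 1 by simp
    show ?thesis by (rule step2g[OF u d s1])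
  next
    case 2
    have u: "UNIV = {k,1,3,4::4}" using 2 by (auto simp: UNIV_4)
    have d: "distinct [k,1,3,4::4]" using 2 by simp
    show ?thesis by (rule step2g[OF u d s1])
  next
    case 3
    have u: "UNIV = {k,1,2,4::4}" using 3 by (auto simp: UNIV_4)
    have d: "distinct [k,1,2,4::4]" using 3 by simp
    show ?thesis by (rule step2g[OF u d s1])
  next
    case 4
    have u: "UNIV = {k,1,2,3::4}" using 4 by (auto simp: UNIV_4)
    have d: "distinct [k,1,2,3::4]" using 4 by simp
    show ?thesis by (rule step2g[OF u d s1])
  qed
qed



lemma step1a:
  fixes a l :: "4 \<Rightarrow> complex"
  assumes D: "\<And>n. D n = (\<Sum>k\<in>UNIV. a k * (\<i> * l k)^n)"
  shows "D 0 * x ^ 3 - \<i> * D 1 * x ^ 2 - (P2/2 * D 0 + D 2) * x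
     + (-P3/3 * D 0 + \<i>/2 * P2 * D 1 + \<i> * D 3)
   = (\<Sum>k\<in>UNIV. a k * (x ^ 3 - \<i> * (\<i> * l k) * x ^ 2 - (P2/2 + (\<i> * l k)^2) * x
     + (-P3/3 + \<i>/2 * P2 * (\<i> * l k) + \<i> * (\<i> * l k)^3)))"
  unfolding D by (simp add: algebra_simps sum.distrib sum_subtractf sum_distrib_left sum_distrib_right sum_divide_distrib sum_negf del: power_mult_distrib)

lemma step1b:
  fixes l :: complex
  shows "x ^ 3 - \<i> * (\<i> * l) * x ^ 2 - (P2/2 + (\<i> * l)^2) * x
     + (-P3/3 + \<i>/2 * P2 * (\<i> * l) + \<i> * (\<i> * l)^3) = 
   x^3 + l * x^2 + (l^2 - P2/2)*x + (l^3 - l * (P2/2) - P3/3)"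
  by (simp add: power2_eq_square power3_eq_cube algebra_simps)



lemma mv_sum: "(H::'a::field^'n^'n) *v (\<Sum>k\<in>S. c k *s v k) = (\<Sum>k\<in>S. c k *s (H *v v k))"
  by (simp add: vec.sum vec.scale)

lemma eig_indep:
  fixes H :: "'a::field^'n^'n"
  assumes ev: "\<And>k. H *v v k = lam k *s v k" and nz: "\<And>k. v k \<noteq> 0" and inj: "inj lam"
    and fin: "finite S"
  shows "(\<Sum>k\<in>S. c k *s v k) = 0 \<Longrightarrow> k \<in> S \<Longrightarrow> c k = 0"
  using fin
proof (induction S arbitrary: c k rule: finite_induct)
  case empty
  then show ?case by simp
next
  case (insert a S)
  have s0: "c a *s v a + (\<Sum>k\<in>S. c k *s v k) = 0" using insert by simp
  have A: "(c a * lam a) *s v a + (\<Sum>k\<in>S. (c k * lam k) *s v k) = 0"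
  proof -
    have "H *v (c a *s v a + (\<Sum>k\<in>S. c k *s v k)) = 0" using s0 by simp
    then show ?thesis
      by (simp add: matrix_vector_right_distrib mv_sum ev vector_smult_assoc mult.commute vec.scale)
  qed
  have B: "(c a * lam a) *s v a + (\<Sum>k\<in>S. (c k * lam a) *s v k) = 0"
  proof -
    have "lam a *s (c a *s v a + (\<Sum>k\<in>S. c k *s v k)) = 0" using s0 by simp
    then show ?thesis
      by (simp add: vector_add_ldistrib vec.scale_sum_right vector_smult_assoc mult.commute)
  qed
  have "(\<Sum>k\<in>S. (c k * lam k) *s v k) = (\<Sum>k\<in>S. (c k * lam a) *s v k)"
    using A B by (metis add_left_cancel)
  then have "(\<Sum>k\<in>S. (c k * (lam k - lam a)) *s v k) = 0"
    by (simp add: right_diff_distrib vector_sub_rdistrib sum_subtractf)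
  then have z: "\<And>k. k \<in> S \<Longrightarrow> c k * (lam k - lam a) = 0"
    using insert.IH[of "\<lambda>k. c k * (lam k - lam a)"] by blast
  have "\<And>k. k \<in> S \<Longrightarrow> c k = 0"
  proof -
    fix k assume k: "k \<in> S"
    then have "lam k \<noteq> lam a" using insert.hyps(2) inj by (metis inj_eq)
    then show "c k = 0" using z[OF k] by simp
  qed
  then have "c a *s v a = 0" using s0 by simp
  then have "c a = 0" using nz[of a] by (simp add: vector_mul_eq_0)
  then show ?case using insert.prems(2) \<open>\<And>k. k \<in> S \<Longrightarrow> c k = 0\<close> by auto
qed

lemma dexp:
  "((\<lambda>t. a * exp (c * complex_of_real t)) has_vector_derivative (a * (c * exp (c * complex_of_real t)))) (at t)"
proof -
  have "((\<lambda>z. exp (c*z)) has_field_derivative c * exp (c * of_real t)) (at (of_real t))"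
    by (auto intro!: derivative_eq_intros)
  from has_vector_derivative_real_field[OF this]
  have "((\<lambda>t. exp (c * complex_of_real t)) has_vector_derivative c * exp (c * of_real t)) (at t)" .
  then show ?thesis by (rule has_vector_derivative_mult_right)
qed

lemma nd:
  "nth_deriv n (\<lambda>t. \<Sum>k\<in>S. a k * exp (c k * complex_of_real t))
   = (\<lambda>t. \<Sum>k\<in>S. a k * c k ^ n * exp (c k * complex_of_real t))"
proof (induction n)
  case 0
  then show ?case by (simp add: nth_deriv_def)
next
  case (Suc n)
  have "nth_deriv (Suc n) (\<lambda>t. \<Sum>k\<in>S. a k * exp (c k * complex_of_real t))
     = (\<lambda>t. vector_derivative (nth_deriv n (\<lambda>t. \<Sum>k\<in>S. a k * exp (c k * complex_of_real t))) (at t))"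
    by (simp add: nth_deriv_def)
  also have "\<dots> = (\<lambda>t. \<Sum>k\<in>S. a k * c k ^ Suc n * exp (c k * complex_of_real t))"
  proof
    fix t
    have "((\<lambda>t. \<Sum>k\<in>S. a k * c k ^ n * exp (c k * complex_of_real t)) has_vector_derivative
        (\<Sum>k\<in>S. a k * c k ^ n * (c k * exp (c k * complex_of_real t)))) (at t)"
      by (intro has_vector_derivative_sum dexp)
    then show "vector_derivative (nth_deriv n (\<lambda>t. \<Sum>k\<in>S. a k * exp (c k * complex_of_real t))) (at t)
       = (\<Sum>k\<in>S. a k * c k ^ Suc n * exp (c k * complex_of_real t))"
      unfolding Suc by (simp add: vector_derivative_at mult_ac)
  qed
  finally show ?case .
qed

lemma pderiv_val:
  fixes l :: "'n::finite \<Rightarrow> complex"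
  shows "poly (pderiv (\<Prod>k\<in>UNIV. [:- l k, 1:])) (l m) = (\<Prod>j\<in>UNIV-{m}. l m - l j)"
proof -
  have "poly (pderiv (\<Prod>k\<in>UNIV. [:- l k, 1:])) (l m) = (\<Sum>a\<in>UNIV. \<Prod>j\<in>UNIV-{a}. l m - l j)"
    by (simp add: pderiv_prod poly_sum poly_prod pderiv_pCons)
  also have "\<dots> = (\<Prod>j\<in>UNIV-{m}. l m - l j)"
  proof -
    have "(\<Sum>a\<in>UNIV-{m}. \<Prod>j\<in>UNIV-{a}. l m - l j) = 0"
      by (rule sum.neutral) (auto intro!: prod_zero bexI[of _ m])
    then show ?thesis by (simp add: sum.remove[of UNIV m])
  qed
  finally show ?thesis .
qed

theorem mainTheorem2:
  fixes H :: "complex^4^4" and lam :: "4 \<Rightarrow> complex"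
  assumes "hermitian H"
    and "trace H = 0"
    and "eigenvalues H = range lam"
    and "inj lam"
  defines "C \<equiv> (\<Prod>k\<in>UNIV. [:- lam k, 1:])"
  defines "F4 \<equiv> (\<lambda>t::real. \<Sum>k\<in>UNIV. exp (\<i> * lam k * of_real t) / poly (pderiv C) (lam k))"
  shows "\<forall>t::real. mat_exp (scal_mat (\<i> * of_real t) H) =
      scal_mat (F4 t) (mat_pow H 3)
    - scal_mat (\<i> * nth_deriv 1 F4 t) (mat_pow H 2)
    - scal_mat (trace (mat_pow H 2) / 2 * F4 t + nth_deriv 2 F4 t) H
    + mat (- trace (mat_pow H 3) / 3 * F4 t + \<i> / 2 * trace (mat_pow H 2) * nth_deriv 1 F4 t
           + \<i> * nth_deriv 3 F4 t)"
proof -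
  have ex: "\<forall>k. \<exists>x. x \<noteq> 0 \<and> H *v x = lam k *s x"
  proof
    fix k
    have "lam k \<in> eigenvalues H" using assms(3) by simp
    then show "\<exists>x. x \<noteq> 0 \<and> H *v x = lam k *s x" unfolding eigenvalues_def by simp
  qed
  then have "\<exists>v. \<forall>k. v k \<noteq> 0 \<and> H *v v k = lam k *s v k" by (rule choice)
  then obtain v where vv: "\<forall>k. v k \<noteq> 0 \<and> H *v v k = lam k *s v k" by blast
  have v1: "\<And>k. v k \<noteq> 0" and v2: "\<And>k. H *v v k = lam k *s v k" using vv by auto
  define V :: "complex^4^4" where "V = (\<chi> r k. v k $ r)"
  have colV: "\<And>k. column k V = v k" by (simp add: column_def V_def vec_eq_iff)
  have "\<forall>c. (\<Sum>i\<in>UNIV. c i *s column i V) = 0 \<longrightarrow> (\<forall>i. c i = 0)"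
    using eig_indep[OF v2 v1 assms(4), of UNIV] by (simp add: colV)
  then obtain W where WV: "W ** V = mat 1"
    using matrix_left_invertible_independent_columns[of V] by blast
  have VW: "V ** W = mat 1" using WV matrix_left_right_inverse by blast
  have HV: "H ** V = V ** dg lam"
  proof -
    have "(H ** V) $ i $ k = (V ** dg lam) $ i $ k" for i k
    proof -
      have a: "(V ** dg lam)$i$k = v k $ i * lam k" by (simp add: Vdg_entry V_def)
      have b: "(H ** V)$i$k = (\<Sum>j\<in>UNIV. H$i$j * v k $ j)" by (simp add: matrix_matrix_mult_def V_def)
      have "(H *v v k) $ i = lam k * v k $ i" using v2 by simp
      then have c: "(\<Sum>j\<in>UNIV. H$i$j * v k $ j) = lam k * v k $ i"
        by (simp add: matrix_vector_mult_def)
      show ?thesis unfolding a b c by (simp add: mult.commute)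
    qed
    then show ?thesis by (simp add: vec_eq_iff)
  qed
  have "H = H ** mat 1" by simp
  also have "\<dots> = H ** (V ** W)" by (simp add: VW)
  also have "\<dots> = (H ** V) ** W" by (simp add: matrix_mul_assoc)
  finally have Hd: "H = V ** dg lam ** W" by (simp add: HV)
  have s1: "(\<Sum>k\<in>UNIV. lam k) = 0" using assms(2) M_trace[OF WV, of lam] Hd by simp
  define d where "d k = poly (pderiv C) (lam k)" for k
  have dval: "\<And>k. d k = (\<Prod>j\<in>UNIV-{k}. lam k - lam j)" unfolding d_def C_def by (rule pderiv_val)
  have dnz: "d k \<noteq> 0" for k
    using assms(4) by (simp add: dval inj_eq)
  have F4e: "F4 = (\<lambda>t. \<Sum>k\<in>UNIV. (1 / d k) * exp ((\<i> * lam k) * complex_of_real t))"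
    by (simp add: F4_def d_def)
  have ndF: "\<And>n t. nth_deriv n F4 t = (\<Sum>k\<in>UNIV. exp (\<i> * lam k * of_real t) / d k * (\<i> * lam k)^n)"
    unfolding F4e nd by (simp add: divide_inverse mult_ac)
  show ?thesis
  proof
    fix t :: real
    define e where "e k = exp (\<i> * lam k * of_real t)" for k
    define D where "D n = nth_deriv n F4 t" for n
    have Dn: "\<And>n. D n = (\<Sum>k\<in>UNIV. e k / d k * (\<i> * lam k)^n)" using ndF D_def e_def by simp
    have F0: "F4 t = D 0" by (simp add: D_def nth_deriv_def)
    have key: "D 0 * lam m ^ 3 - \<i> * D 1 * lam m ^ 2 - ((\<Sum>k\<in>UNIV. lam k ^ 2)/2 * D 0 + D 2) * lam m
     + (-(\<Sum>k\<in>UNIV. lam k^3)/3 * D 0 + \<i>/2 * (\<Sum>k\<in>UNIV. lam k^2) * D 1 + \<i> * D 3) = e m" for m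
    proof -
      have "D 0 * lam m ^ 3 - \<i> * D 1 * lam m ^ 2 - ((\<Sum>k\<in>UNIV. lam k ^ 2)/2 * D 0 + D 2) * lam m
     + (-(\<Sum>k\<in>UNIV. lam k^3)/3 * D 0 + \<i>/2 * (\<Sum>k\<in>UNIV. lam k^2) * D 1 + \<i> * D 3)
        = (\<Sum>k\<in>UNIV. e k / d k * (\<Prod>j\<in>UNIV-{k}. lam m - lam j))"
        unfolding step1a[where D=D and a="\<lambda>k. e k / d k" and l=lam, OF Dn] step1b step2[OF s1] ..
      also have "\<dots> = e m / d m * (\<Prod>j\<in>UNIV-{m}. lam m - lam j)"
      proof -
        have "(\<Sum>k\<in>UNIV-{m}. e k / d k * (\<Prod>j\<in>UNIV-{k}. lam m - lam j)) = 0"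
          by (rule sum.neutral) (auto intro!: prod_zero bexI[of _ m])
        then show ?thesis by (simp add: sum.remove[of UNIV m])
      qed
      also have "\<dots> = e m" using dnz[of m] by (simp add: dval[symmetric])
      finally show ?thesis .
    qed
    show "mat_exp (scal_mat (\<i> * of_real t) H) =
      scal_mat (F4 t) (mat_pow H 3)
    - scal_mat (\<i> * nth_deriv 1 F4 t) (mat_pow H 2)
    - scal_mat (trace (mat_pow H 2) / 2 * F4 t + nth_deriv 2 F4 t) H
    + mat (- trace (mat_pow H 3) / 3 * F4 t + \<i> / 2 * trace (mat_pow H 2) * nth_deriv 1 F4 t
           + \<i> * nth_deriv 3 F4 t)"
      unfolding F0 D_def[symmetric]
      apply (simp only: Hd M_pow[OF WV VW] M_scal M_trace[OF WV] M_mat[OF VW] M_diff M_add M_exp[OF WV VW])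
      apply (rule arg_cong[where f="\<lambda>f. V ** dg f ** W"])
      apply (rule ext)
      unfolding key e_def by (simp add: mult_ac)
  qed
qed

end
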